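(* Let $\mathfrak{g}$ be a finite-dimensional complex nilpotent Lie algebra which is not a pre-Engel-$4$ Lie algebra. Then $\mathfrak{g}$ does not admit a periodic prederivation.
   Context: A Lie algebra $\mathfrak{g}$ is a pre-Engel-$4$ Lie algebra if the linear span of $\{x\in\mathfrak{g}\mid \mathrm{ad}(x)^4=0\}$ equals $\mathfrak{g}$. A linear map $P:\mathfrak{g}\to\mathfrak{g}$ is a prederivation if $P([x,[y,z]])=[P(x),[y,z]]+[x,[P(y),z]]+[x,[y,P(z)]]$ for all $x,y,z\in\mathfrak{g}$; it is periodic if $P^m=\mathrm{id}$ for some integer $m\ge 1$. *)

theory Defs
  imports Complex_Main
begin

definition complex_lie_algebra ::
  "(complex \<Rightarrow> 'a::ab_group_add \<Rightarrow> 'a) \<Rightarrow> ('a \<Rightarrow> 'a \<Rightarrow> 'a) \<Rightarrow> bool" where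
  "complex_lie_algebra sc br \<longleftrightarrow>
     vector_space sc \<and>
     (\<forall>x. Vector_Spaces.linear sc sc (br x)) \<and>
     (\<forall>y. Vector_Spaces.linear sc sc (\<lambda>x. br x y)) \<and>
     (\<forall>x. br x x = 0) \<and>
     (\<forall>x y z. br x (br y z) + br y (br z x) + br z (br x y) = 0)"

definition finite_dim :: "(complex \<Rightarrow> 'a::ab_group_add \<Rightarrow> 'a) \<Rightarrow> bool" where
  "finite_dim sc \<longleftrightarrow> (\<exists>B. finite_dimensional_vector_space sc B)"

text \<open>Lower central series: g^1 = g (index 0 here), g^{k+1} = [g, g^k].\<close>
fun lower_central ::
  "(complex \<Rightarrow> 'a::ab_group_add \<Rightarrow> 'a) \<Rightarrow> ('a \<Rightarrow> 'a \<Rightarrow> 'a) \<Rightarrow> nat \<Rightarrow> 'a set" where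
  "lower_central sc br 0 = UNIV"
| "lower_central sc br (Suc k) =
     module.span sc {br x y | x y. y \<in> lower_central sc br k}"

definition nilpotent_lie ::
  "(complex \<Rightarrow> 'a::ab_group_add \<Rightarrow> 'a) \<Rightarrow> ('a \<Rightarrow> 'a \<Rightarrow> 'a) \<Rightarrow> bool" where
  "nilpotent_lie sc br \<longleftrightarrow> (\<exists>k. lower_central sc br k = {0})"

definition pre_engel4 ::
  "(complex \<Rightarrow> 'a::ab_group_add \<Rightarrow> 'a) \<Rightarrow> ('a \<Rightarrow> 'a \<Rightarrow> 'a) \<Rightarrow> bool" where
  "pre_engel4 sc br \<longleftrightarrow> module.span sc {x. (br x ^^ 4) = (\<lambda>_. 0)} = UNIV"

definition prederivation ::
  "(complex \<Rightarrow> 'a::ab_group_add \<Rightarrow> 'a) \<Rightarrow> ('a \<Rightarrow> 'a \<Rightarrow> 'a) \<Rightarrow> ('a \<Rightarrow> 'a) \<Rightarrow> bool" where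
  "prederivation sc br P \<longleftrightarrow>
     Vector_Spaces.linear sc sc P \<and>
     (\<forall>x y z. P (br x (br y z)) =
        br (P x) (br y z) + br x (br (P y) z) + br x (br y (P z)))"

definition periodic :: "('a \<Rightarrow> 'a) \<Rightarrow> bool" where
  "periodic P \<longleftrightarrow> (\<exists>m::nat. m \<ge> 1 \<and> P ^^ m = id)"

end

theory Submission
  imports Defs "HOL-Analysis.Complex_Transcendental"
begin

lemma lin_facts:
  assumes "Vector_Spaces.linear sc sc f"
  shows "f (a + b) = f a + f b" "f (sc c x) = sc c (f x)"
    "f (sum g S) = (\<Sum>i\<in>S. f (g i))" "f 0 = 0"
proof -
  have h: "module_hom sc sc f" using assms by (simp add: module_hom_iff_linear)
  show "f (a + b) = f a + f b" using module_hom.add[OF h] .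
  show "f (sc c x) = sc c (f x)" using module_hom.scale[OF h] .
  show "f (sum g S) = (\<Sum>i\<in>S. f (g i))" using module_hom.sum[OF h] .
  show "f 0 = 0" using module_hom.zero[OF h] .
qed

lemma root_not_one:
  fixes m k :: nat
  assumes "0 < k" "k < m"
  shows "exp (2 * pi * \<i> / of_nat m) ^ k \<noteq> 1"
proof
  assume "exp (2 * pi * \<i> / of_nat m) ^ k = 1"
  moreover have "exp (of_nat k * (2 * pi * \<i> / of_nat m)) = exp (2 * pi * \<i> / of_nat m) ^ k"
    by (rule exp_of_nat_mult)
  ultimately have "exp (of_nat k * (2 * pi * \<i> / of_nat m)) = 1" by simp
  then obtain n :: int where "Im (of_nat k * (2 * pi * \<i> / of_nat m)) = of_int (2 * n) * pi"
    by (auto simp: exp_eq_1)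
  then have "real k * 2 * pi / real m = 2 * real_of_int n * pi" by simp
  then have "real k = real_of_int n * real m" using assms by (simp add: field_simps)
  then have e: "int k = n * int m" by (metis of_int_eq_iff of_int_mult of_int_of_nat_eq)
  show False
  proof (cases "n \<le> 0")
    case True then have "n * int m \<le> 0" by (simp add: mult_nonpos_nonneg)
    then show False using e assms by simp
  next
    case False then have n1: "n \<ge> 1" by simp
    have "int m * 1 \<le> int m * n" by (rule mult_left_mono[OF n1]) simp
    then have "n * int m \<ge> int m" by (simp add: mult.commute)
    then show False using e assms by linarith
  qed
qed

lemma root_m:
  fixes m :: nat
  assumes "0 < m"
  shows "exp (2 * pi * \<i> / of_nat m) ^ m = 1"
proof -
  have "exp (2 * pi * \<i> / of_nat m) ^ m = exp (of_nat m * (2 * pi * \<i> / of_nat m))"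
    by (rule exp_of_nat_mult[symmetric])
  also have "of_nat m * (2 * pi * \<i> / of_nat m) = 2 * pi * \<i>" using assms by simp
  hence "exp (of_nat m * (2 * pi * \<i> / of_nat m)) = exp (2 * pi * \<i>)" by simp
  also have "\<dots> = 1" by simp
  finally show ?thesis .
qed

lemma norm_root:
  fixes z :: complex
  assumes "z ^ m = 1" "m \<ge> 1"
  shows "norm z = 1"
  using power_eq_1_iff[OF assms(1)] assms(2) by simp

theorem proposition5p11:
  fixes sc :: "complex \<Rightarrow> 'a::ab_group_add \<Rightarrow> 'a"
    and br :: "'a \<Rightarrow> 'a \<Rightarrow> 'a"
  assumes "complex_lie_algebra sc br"
    and "finite_dim sc"
    and "nilpotent_lie sc br"
    and "\<not> pre_engel4 sc br"
  shows "\<not> (\<exists>P. prederivation sc br P \<and> periodic P)"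
proof
  assume "\<exists>P. prederivation sc br P \<and> periodic P"
  then obtain P m where Plin: "Vector_Spaces.linear sc sc P"
    and Pd: "\<And>x y z. P (br x (br y z)) =
        br (P x) (br y z) + br x (br (P y) z) + br x (br y (P z))"
    and m1: "m \<ge> 1" and Pm: "P ^^ m = id"
    unfolding prederivation_def periodic_def by blast
  have vs: "vector_space sc" and l1: "\<And>x. Vector_Spaces.linear sc sc (br x)"
    and l2: "\<And>y. Vector_Spaces.linear sc sc (\<lambda>x. br x y)"
    using assms(1) unfolding complex_lie_algebra_def by auto
  interpret V: vector_space sc by (rule vs)
  have brl: "br (sc c x) z = sc c (br x z)" for c x z
    using lin_facts(2)[OF l2[of z]] by simp
  have brr: "br x (sc c z) = sc c (br x z)" for c x z
    using lin_facts(2)[OF l1[of x]] by simp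
  have Psc: "P (sc c x) = sc c (P x)" for c x using lin_facts(2)[OF Plin] .
  have two: "P (br x (br x y)) = sc (2 * z + e) (br x (br x y))"
    if "P x = sc z x" "P y = sc e y" for x y z e
  proof -
    have "P (br x (br x y)) = br (P x) (br x y) + br x (br (P x) y) + br x (br x (P y))"
      by (rule Pd)
    also have "\<dots> = sc z (br x (br x y)) + sc z (br x (br x y)) + sc e (br x (br x y))"
      using that by (simp only: brl brr)
    also have "\<dots> = sc (2 * z + e) (br x (br x y))"
      by (simp only: V.scale_left_distrib mult_2)
    finally show ?thesis .
  qed
  have powk: "(P ^^ k) w = sc (l ^ k) w" if "P w = sc l w" for w l k
    by (induction k) (auto simp: that Psc mult.commute)
  have eigroot: "l ^ m = 1" if "P w = sc l w" "w \<noteq> 0" for w l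
  proof -
    have "sc (l ^ m) w = sc 1 w" using powk[OF that(1), of m] Pm by simp
    then show ?thesis using V.scale_right_imp_eq[OF that(2)] by blast
  qed
  define w where "w = exp (2 * pi * \<i> / of_nat m)"
  have wm: "w ^ m = 1" using root_m m1 unfolding w_def by simp
  have wk: "w ^ k \<noteq> 1" if "0 < k" "k < m" for k
    using root_not_one that unfolding w_def by simp
  have w0: "w \<noteq> 0" unfolding w_def by simp
  define E where "E j v = sc (1 / of_nat m) (\<Sum>k<m. sc (inverse (w ^ j) ^ k) ((P ^^ k) v))" for j v
  have Eeig: "P (E j v) = sc (w ^ j) (E j v)" for j v
  proof -
    define f where "f k = sc (inverse (w ^ j) ^ k) ((P ^^ k) v)" for k
    have fm: "f m = f 0"
    proof -
      have "(w ^ j) ^ m = (w ^ m) ^ j" by (metis power_mult mult.commute)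
      then have "inverse (w ^ j) ^ m = 1" using wm by (metis power_inverse inverse_1 power_one)
      then show ?thesis unfolding f_def using Pm by simp
    qed
    have sh: "(\<Sum>k<m. f (Suc k)) = (\<Sum>k<m. f k)"
    proof -
      have "(\<Sum>k<Suc m. f k) = f 0 + (\<Sum>k<m. f (Suc k))" by (rule sum.lessThan_Suc_shift)
      moreover have "(\<Sum>k<Suc m. f k) = (\<Sum>k<m. f k) + f m" by simp
      ultimately show ?thesis using fm by (simp add: add.commute)
    qed
    have "P (E j v) = sc (1 / of_nat m) (\<Sum>k<m. sc (inverse (w ^ j) ^ k) ((P ^^ Suc k) v))"
      unfolding E_def by (simp add: Psc lin_facts(3)[OF Plin])
    also have "\<dots> = sc (1 / of_nat m) (\<Sum>k<m. sc (w ^ j) (f (Suc k)))"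
      unfolding f_def using w0
      by (intro arg_cong[where f="sc _"] sum.cong) (auto simp: field_simps)
    also have "\<dots> = sc (w ^ j) (E j v)"
      unfolding E_def f_def[symmetric] using sh
      by (simp add: V.scale_sum_right[symmetric] mult.commute)
    finally show ?thesis .
  qed
  have csum: "(\<Sum>j<m. inverse (w ^ j) ^ k) = (if k = 0 then of_nat m else 0)"
    if "k < m" for k
  proof (cases "k = 0")
    case True then show ?thesis by simp
  next
    case False
    define d where "d = inverse (w ^ k)"
    have "d \<noteq> 1" using wk[of k] False that unfolding d_def by auto
    moreover have "d ^ m = 1" unfolding d_def using wm
      by (metis inverse_1 power_inverse power_mult mult.commute power_one)
    moreover have "(\<Sum>j<m. inverse (w ^ j) ^ k) = (\<Sum>j<m. d ^ j)"
      unfolding d_def by (intro sum.cong) (auto simp: power_inverse simp flip: power_mult mult.commute)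
    ultimately show ?thesis using False by (simp add: geometric_sum)
  qed
  have decomp: "(\<Sum>j<m. E j v) = v" for v
  proof -
    have "(\<Sum>j<m. E j v) = sc (1 / of_nat m) (\<Sum>j<m. \<Sum>k<m. sc (inverse (w ^ j) ^ k) ((P ^^ k) v))"
      unfolding E_def by (simp add: V.scale_sum_right)
    also have "\<dots> = sc (1 / of_nat m) (\<Sum>k<m. sc (\<Sum>j<m. inverse (w ^ j) ^ k) ((P ^^ k) v))"
      unfolding V.scale_sum_left by (subst sum.swap) (rule refl)
    also have "\<dots> = sc (1 / of_nat m) (\<Sum>k<m. if k = 0 then sc (of_nat m) v else 0)"
      by (intro arg_cong[where f="sc _"] sum.cong) (auto simp: csum)
    also have "\<dots> = v" using m1 by simp
    finally show ?thesis .
  qed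
  have eig: "(br x ^^ 4) = (\<lambda>_. 0)" if ex: "P x = sc z x" for x z
  proof
    fix y
    have "br x (br x (br x (br x y))) = 0" if ey: "P y = sc e y" for y e
    proof (rule ccontr)
      assume nz: "br x (br x (br x (br x y))) \<noteq> 0"
      have "x \<noteq> 0" using nz lin_facts(4)[OF l2] by auto
      then have nzz: "norm z = 1" using eigroot[OF ex] m1 norm_root by blast
      have "y \<noteq> 0" using nz lin_facts(4)[OF l1] by auto
      then have nze: "norm e = 1" using eigroot[OF ey] m1 norm_root by blast
      have "P (br x (br x (br x (br x y)))) = sc (2 * z + (2 * z + e)) (br x (br x (br x (br x y))))"
        by (rule two[OF ex two[OF ex ey]])
      then have "norm (2 * z + (2 * z + e)) = 1" using eigroot nz m1 norm_root by blast
      moreover have "2 * z + (2 * z + e) = 4 * z + e" by simp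
      moreover have "norm (4 * z) = 4" using nzz by (simp add: norm_mult)
      moreover have "norm (4 * z) - norm e \<le> norm (4 * z + e)" by (rule norm_diff_ineq)
      ultimately have "norm (4 * z + e) = 1" "4 - 1 \<le> norm (4 * z + e)" using nze by simp_all
      then show False by simp
    qed
    note eigy = this
    have "(br x ^^ 4) y = br x (br x (br x (br x y)))" by (simp add: numeral_eq_Suc)
    also have "\<dots> = br x (br x (br x (br x (\<Sum>j<m. E j y))))" using decomp by simp
    also have "\<dots> = (\<Sum>j<m. br x (br x (br x (br x (E j y)))))"
      by (simp add: lin_facts(3)[OF l1])
    also have "\<dots> = 0" using eigy[OF Eeig] by simp
    finally show "(br x ^^ 4) y = 0" .
  qed
  have "pre_engel4 sc br"
    unfolding pre_engel4_def
  proof (rule set_eqI, rule iffI)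
    fix v :: 'a
    have "(\<Sum>j<m. E j v) \<in> V.span {x. (br x ^^ 4) = (\<lambda>_. 0)}"
      by (rule V.span_sum) (auto intro: V.span_base eig[OF Eeig])
    then show "v \<in> V.span {x. (br x ^^ 4) = (\<lambda>_. 0)}" using decomp by simp
  qed simp
  then show False using assms(4) by simp
qed

end
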